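(* Assume the Standing Setup. Let $n\ge1$, let $\vec A$ be a time-dependent vector field in $\mathcal F$ which is $n$-admissible for $\mathcal G$, let $\vec\Delta\in H^0(X,\mathcal F)$ with $\vec\Delta|_Y\in H^0(Y,\mathcal G)$, and let $\vec E\in H^0(X,\mathcal F)$ be any time-independent vector field. Set $\vec B:=\vec A+\frac{t^n}{n!}\vec\Delta+\frac{t^{n+1}}{(n+1)!}\vec E$. Then for all $1\le m\le n$, $$\mathcal L^m_{D(\vec B)}\vec B\equiv \mathcal L^m_{D(\vec A)}\vec A+\tfrac{t^{n-m}}{(n-m)!}\vec\Delta \pmod{t^{n-m+1}},$$ and $$\mathcal L^{n+1}_{D(\vec B)}\vec B\equiv\mathcal L^{n+1}_{D(\vec A)}\vec A+\vec E+n[\vec A,\vec\Delta]\pmod{t}.$$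
   Context: Standing Setup: $X$ is a complex manifold, $\mathcal F\subseteq T_X$ a Lie-closed subsheaf of $\mathbb C_X$-modules ($\mathbb C_X$ = locally constant functions), $Y\subseteq X$ a reduced complex subspace with inclusion $f$, $\mathcal F_Y:=\operatorname{Im}(f^{-1}\mathcal F\to f^*T_X)$, $\mathcal G\subseteq\mathcal F_Y$ an obstruction sheaf for $\mathcal F$ (for every open $U\subseteq X$ and $\vec A_1,\vec A_2\in\mathcal F(U)$ with $f^*\vec A_1=f^*\vec A_2$ on $f^{-1}(U)$, $f^*[\vec A_1,\vec A_2]\in\mathcal G(f^{-1}(U))$). A time-dependent vector field is a section of $p_X^*T_X$ over $X\times\mathbb C$ ($t$ the coordinate of $\mathbb C$, $p_X$ the projection), viewed inside $T_{X\times\mathbb C}$; it is in $\mathcal F$ if it equals $\sum_{i=0}^N t^i\vec A_i$ with $\vec A_i\in H^0(X,\mathcal F)$; time-independent fields on $X$ are regarded as time-dependent via pull-back. $\vec A_0|_Y$ denotes the image in $H^0(Y,f^*T_X)$ of the restriction to time $0$. $D(\vec A):=\partial/\partial t+\vec A$, $\mathcal L_{\vec V}\vec W:=[\vec V,\vec W]$ on $X\times\mathbb C$, $\mathcal L^m$ its $m$-fold iterate. $\vec A$ is $n$-admissible for $\mathcal G$ if $(\mathcal L^m_{D(\vec A)}\vec A)_0|_Y\in H^0(Y,\mathcal G)$ for $1\le m\le n$. For time-dependent fields $\vec V,\vec W$, $\vec V\equiv\vec W\pmod{t^k}$ means $\vec V-\vec W=t^k\vec U$ for some time-dependent vector field $\vec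 U$. *)

theory Defs
  imports Main "HOL.Vector_Spaces" "HOL.Complex"
begin

text \<open>Abstract model. 'v plays the role of the complex Lie algebra of global
holomorphic vector fields on X (with scalar multiplication sc and Lie bracket br).
A time-dependent vector field that is polynomial in t is recorded by its sequence
of t-coefficients (nat => 'v): P k is the coefficient of t^k.\<close>

definition is_lie_bracket :: "(complex \<Rightarrow> 'v::ab_group_add \<Rightarrow> 'v) \<Rightarrow> ('v \<Rightarrow> 'v \<Rightarrow> 'v) \<Rightarrow> bool" where
  "is_lie_bracket sc br \<longleftrightarrow>
     (\<forall>x y z. br (x + y) z = br x z + br y z) \<and>
     (\<forall>x y z. br x (y + z) = br x y + br x z) \<and>
     (\<forall>c x y. br (sc c x) y = sc c (br x y)) \<and>
     (\<forall>c x y. br x (sc c y) = sc c (br x y)) \<and>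
     (\<forall>x. br x x = 0) \<and>
     (\<forall>x y z. br x (br y z) + br y (br z x) + br z (br x y) = 0)"

text \<open>Bracket on X x C of two time-dependent fields (no d/dt component):
[sum t^i A_i, sum t^j B_j] = sum t^(i+j) [A_i,B_j].\<close>
definition td_bracket :: "('v \<Rightarrow> 'v \<Rightarrow> 'v::comm_monoid_add) \<Rightarrow> (nat \<Rightarrow> 'v) \<Rightarrow> (nat \<Rightarrow> 'v) \<Rightarrow> nat \<Rightarrow> 'v" where
  "td_bracket br P Q = (\<lambda>k. \<Sum>i\<le>k. br (P i) (Q (k - i)))"

text \<open>[d/dt, W] = dW/dt.\<close>
definition td_dt :: "(complex \<Rightarrow> 'v \<Rightarrow> 'v) \<Rightarrow> (nat \<Rightarrow> 'v) \<Rightarrow> nat \<Rightarrow> 'v" where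
  "td_dt sc P = (\<lambda>k. sc (of_nat (Suc k)) (P (Suc k)))"

text \<open>L_{D(A)} W = [d/dt + A, W].\<close>
definition lie_D :: "(complex \<Rightarrow> 'v \<Rightarrow> 'v) \<Rightarrow> ('v \<Rightarrow> 'v \<Rightarrow> 'v::comm_monoid_add) \<Rightarrow> (nat \<Rightarrow> 'v) \<Rightarrow> (nat \<Rightarrow> 'v) \<Rightarrow> nat \<Rightarrow> 'v" where
  "lie_D sc br A W = (\<lambda>k. td_dt sc W k + td_bracket br A W k)"

definition lie_iter :: "(complex \<Rightarrow> 'v \<Rightarrow> 'v) \<Rightarrow> ('v \<Rightarrow> 'v \<Rightarrow> 'v::comm_monoid_add) \<Rightarrow> (nat \<Rightarrow> 'v) \<Rightarrow> nat \<Rightarrow> nat \<Rightarrow> 'v" where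
  "lie_iter sc br A m = ((lie_D sc br A) ^^ m) A"

definition const_td :: "'v \<Rightarrow> nat \<Rightarrow> 'v::zero" where
  "const_td V = (\<lambda>k. if k = 0 then V else 0)"

text \<open>P == Q (mod t^k): P - Q = t^k U, i.e. coefficients of t^j, j < k, agree.\<close>
definition cong_mod_t :: "nat \<Rightarrow> (nat \<Rightarrow> 'v) \<Rightarrow> (nat \<Rightarrow> 'v) \<Rightarrow> bool" where
  "cong_mod_t k P Q \<longleftrightarrow> (\<forall>j<k. P j = Q j)"

text \<open>Time-dependent field in F: sum_{i=0}^N t^i A_i with A_i in H^0(X,F).\<close>
definition td_in_F :: "'v set \<Rightarrow> (nat \<Rightarrow> 'v::zero) \<Rightarrow> bool" where
  "td_in_F F P \<longleftrightarrow> (\<exists>N. \<forall>i>N. P i = 0) \<and> (\<forall>i. P i \<in> F)"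

text \<open>n-admissible for G: (L^m_{D(A)} A)_0|_Y in H^0(Y,G) for 1 <= m <= n.\<close>
definition admissible :: "(complex \<Rightarrow> 'v \<Rightarrow> 'v) \<Rightarrow> ('v \<Rightarrow> 'v \<Rightarrow> 'v::comm_monoid_add) \<Rightarrow> ('v \<Rightarrow> 'w) \<Rightarrow> 'w set \<Rightarrow> nat \<Rightarrow> (nat \<Rightarrow> 'v) \<Rightarrow> bool" where
  "admissible sc br res G n A \<longleftrightarrow> (\<forall>m. 1 \<le> m \<and> m \<le> n \<longrightarrow> res (lie_iter sc br A m 0) \<in> G)"

end

theory Submission imports Defs begin

lemma br_facts:
  assumes lie: "is_lie_bracket sc br"
  shows "br x 0 = 0" "br 0 x = 0" "br a (x - y) = br a x - br a y"
    "br x y + br y x = 0" "br a (sc c x) = sc c (br a x)"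
    "br a (x + y) = br a x + br a y"
proof -
  have add1: "\<And>x y z. br (x + y) z = br x z + br y z"
   and add2: "\<And>x y z. br x (y + z) = br x y + br x z"
   and sc2: "\<And>c x y. br x (sc c y) = sc c (br x y)"
   and alt: "\<And>x. br x x = 0" using lie unfolding is_lie_bracket_def by auto
  show z1: "br x 0 = 0" using add2[of x 0 0] by simp
  show "br 0 x = 0" using add1[of 0 0 x] by simp
  show "br a (x - y) = br a x - br a y" using add2[of a "x - y" y] by (simp add: algebra_simps)
  have "br (x+y) (x+y) = br x x + br x y + (br y x + br y y)" by (simp add: add1 add2)
  thus "br x y + br y x = 0" using alt[of "x+y"] alt[of x] alt[of y] by simp
  show "br a (sc c x) = sc c (br a x)" by (rule sc2)
  show "br a (x + y) = br a x + br a y" by (rule add2)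
qed

lemma rec_step:
  "lie_iter sc br P (Suc m) k = sc (of_nat (Suc k)) (lie_iter sc br P m (Suc k))
     + (\<Sum>i\<le>k. br (P i) (lie_iter sc br P m (k - i)))"
  by (simp add: lie_iter_def lie_D_def td_dt_def td_bracket_def)

lemma iter0: "lie_iter sc br P 0 = P"
  by (simp add: lie_iter_def)

lemma self_bracket_zero:
  assumes vs: "vector_space sc" and lie: "is_lie_bracket sc br"
  shows "(\<Sum>i\<le>(k::nat). br (P i) (P (k - i))) = 0"
proof -
  interpret V: vector_space sc by (rule vs)
  define S where "S = (\<Sum>i\<le>k. br (P i) (P (k - i)))"
  have "S = (\<Sum>i<Suc k. br (P i) (P (k - i)))" unfolding S_def
    by (simp add: lessThan_Suc_atMost)
  also have "\<dots> = (\<Sum>i<Suc k. br (P (Suc k - Suc i)) (P (k - (Suc k - Suc i))))"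
    by (rule sum.nat_diff_reindex[symmetric])
  also have "\<dots> = (\<Sum>i<Suc k. br (P (k - i)) (P i))"
    by (rule sum.cong) auto
  also have "\<dots> = (\<Sum>i<Suc k. - br (P i) (P (k - i)))"
    using br_facts(4)[OF lie] by (intro sum.cong) (auto simp: eq_neg_iff_add_eq_0 add.commute)
  also have "\<dots> = - S" unfolding S_def by (simp add: sum_negf lessThan_Suc_atMost)
  finally have "S + S = 0" by (metis add.right_inverse)
  hence "sc 2 S = 0" using V.scale_left_distrib[of 1 1 S] by simp
  hence "S = 0" by simp
  thus ?thesis unfolding S_def .
qed


lemma fact_aux: "(of_nat (Suc k)::complex) * inverse (fact (Suc k)) = inverse (fact k)"
proof -
  have "(of_nat (Suc k)::complex) \<noteq> 0" by (simp only: of_nat_eq_0_iff)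
  moreover have "(fact (Suc k)::complex) = of_nat (Suc k) * fact k" by (rule fact_Suc)
  ultimately show ?thesis by (simp add: inverse_mult_distrib del: of_nat_Suc)
qed

theorem mainTheorem5:
  fixes sc :: "complex \<Rightarrow> 'v::ab_group_add \<Rightarrow> 'v"
    and br :: "'v \<Rightarrow> 'v \<Rightarrow> 'v"
    and scw :: "complex \<Rightarrow> 'w::ab_group_add \<Rightarrow> 'w"
    and res :: "'v \<Rightarrow> 'w"
    and F :: "'v set" and G :: "'w set"
    and n :: nat and A :: "nat \<Rightarrow> 'v" and \<Delta> E :: 'v
  assumes vs: "vector_space sc" and vsw: "vector_space scw"
    and lie: "is_lie_bracket sc br"
    and F_sub: "module.subspace sc F"
    and F_closed: "\<forall>x\<in>F. \<forall>y\<in>F. br x y \<in> F"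
    and res_lin: "Vector_Spaces.linear sc scw res"
    and G_sub: "module.subspace scw G"
    and obstr: "\<forall>A1\<in>F. \<forall>A2\<in>F. res A1 = res A2 \<longrightarrow> res (br A1 A2) \<in> G"
    and n_pos: "1 \<le> n"
    and A_F: "td_in_F F A"
    and A_adm: "admissible sc br res G n A"
    and \<Delta>_F: "\<Delta> \<in> F" and \<Delta>_G: "res \<Delta> \<in> G"
    and E_F: "E \<in> F"
  defines "B \<equiv> (\<lambda>k. A k
                + (if k = n then sc (inverse (fact n)) \<Delta> else 0)
                + (if k = Suc n then sc (inverse (fact (Suc n))) E else 0))"
  shows "(\<forall>m. 1 \<le> m \<and> m \<le> n \<longrightarrow>
            cong_mod_t (n - m + 1) (lie_iter sc br B m)
              (\<lambda>k. lie_iter sc br A m k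
                   + (if k = n - m then sc (inverse (fact (n - m))) \<Delta> else 0)))
       \<and> cong_mod_t 1 (lie_iter sc br B (Suc n))
              (\<lambda>k. lie_iter sc br A (Suc n) k + const_td E k
                   + sc (of_nat n) (td_bracket br A (const_td \<Delta>) k))"
proof -
  interpret V: vector_space sc by (rule vs)
  define X where "X = br (A 0) \<Delta>"
  define D where "D = (\<lambda>m k. lie_iter sc br B m k - lie_iter sc br A m k)"
  have BA: "\<And>i. i < n \<Longrightarrow> B i = A i" unfolding B_def by auto
  have Bn: "B n = A n + sc (inverse (fact n)) \<Delta>" unfolding B_def by auto
  have BSn: "B (Suc n) = A (Suc n) + sc (inverse (fact (Suc n))) E" unfolding B_def by auto
  have Bbig: "\<And>i. Suc n < i \<Longrightarrow> B i = A i" unfolding B_def by auto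
  have step: "D (Suc m) k = sc (of_nat (Suc k)) (D m (Suc k)) + (\<Sum>i\<le>k. br (A i) (D m (k - i)))"
    if "k < n" for m k
  proof -
    have "(\<Sum>i\<le>k. br (B i) (lie_iter sc br B m (k - i))) = (\<Sum>i\<le>k. br (A i) (lie_iter sc br B m (k - i)))"
      using that BA by (intro sum.cong) auto
    thus ?thesis unfolding D_def rec_step
      by (simp add: V.scale_right_diff_distrib br_facts(3)[OF lie] sum_subtractf algebra_simps)
  qed
  have one: "lie_iter sc br P (Suc 0) k = sc (of_nat (Suc k)) (P (Suc k))" for P k
    using rec_step[of sc br P 0 k] self_bracket_zero[OF vs lie, where k=k and P=P] by (simp add: iter0)
  have D1: "D (Suc 0) k = sc (of_nat (Suc k)) (B (Suc k) - A (Suc k))" for k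
    unfolding D_def one by (simp add: V.scale_right_diff_distrib)
  have claim: "(\<forall>k < n - Suc j. D (Suc j) k = 0) \<and>
      D (Suc j) (n - Suc j) = sc (inverse (fact (n - Suc j))) \<Delta> \<and>
      D (Suc j) (Suc (n - Suc j)) = sc (inverse (fact (Suc (n - Suc j)))) (E + sc (of_nat j) X)"
    if "j < n" for j
    using that
  proof (induction j)
    case 0
    then obtain q where q: "n = Suc q" by (cases n) auto
    have a: "\<forall>k < n - Suc 0. D (Suc 0) k = 0"
      using BA by (auto simp: D1)
    have b: "D (Suc 0) (n - Suc 0) = sc (inverse (fact (n - Suc 0))) \<Delta>"
      using Bn q by (simp add: D1 V.scale_scale fact_aux del: of_nat_Suc fact_Suc)
    have c: "D (Suc 0) (Suc (n - Suc 0)) = sc (inverse (fact (Suc (n - Suc 0)))) (E + sc (of_nat 0) X)"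
      using BSn q by (simp add: D1 V.scale_scale fact_aux del: of_nat_Suc fact_Suc)
    show ?case using a b c by blast
  next
    case (Suc j)
    define m where "m = Suc j"
    define p where "p = n - Suc j"
    from Suc.prems obtain q where pq: "p = Suc q" unfolding p_def
      by (metis Suc_diff_Suc zero_less_diff Suc_lessD)
    have p_lt: "p < n" unfolding p_def using Suc.prems by simp
    have q_eq: "n - Suc (Suc j) = q" using pq unfolding p_def by simp
    from Suc.IH Suc.prems have IH:
      "\<forall>k < p. D m k = 0" "D m p = sc (inverse (fact p)) \<Delta>"
      "D m (Suc p) = sc (inverse (fact (Suc p))) (E + sc (of_nat j) X)"
      unfolding m_def p_def by auto
    have sum0: "(\<Sum>i\<le>k. br (A i) (D m (k - i))) = 0" if "k < p" for k
      using IH(1) that by (intro sum.neutral) (auto simp: br_facts(1)[OF lie])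
    have a: "\<forall>k < q. D (Suc m) k = 0"
    proof (intro allI impI)
      fix k assume "k < q"
      hence "k < n" "Suc k < p" "k < p" using pq p_lt by auto
      thus "D (Suc m) k = 0" using step[of k m] sum0 IH(1) by simp
    qed
    have b: "D (Suc m) q = sc (inverse (fact q)) \<Delta>"
    proof -
      have "q < n" "q < p" using pq p_lt by auto
      thus ?thesis using step[of q m] sum0[of q] IH(2) pq
        by (simp add: V.scale_scale fact_aux del: of_nat_Suc fact_Suc)
    qed
    have c: "D (Suc m) p = sc (inverse (fact p)) (E + sc (of_nat (Suc j)) X)"
    proof -
      have "(\<Sum>i\<le>p. br (A i) (D m (p - i))) = br (A 0) (D m p) + (\<Sum>i\<le>q. br (A (Suc i)) (D m (p - Suc i)))"
        unfolding pq by (subst sum.atMost_Suc_shift) simp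
      also have "(\<Sum>i\<le>q. br (A (Suc i)) (D m (p - Suc i))) = 0"
        using IH(1) pq by (intro sum.neutral) (auto simp: br_facts(1)[OF lie])
      finally have s: "(\<Sum>i\<le>p. br (A i) (D m (p - i))) = sc (inverse (fact p)) X"
        using IH(2) by (simp add: X_def br_facts(5)[OF lie])
      have "D (Suc m) p = sc (of_nat (Suc p)) (D m (Suc p)) + sc (inverse (fact p)) X"
        using step[OF p_lt, of m] s by simp
      also have "\<dots> = sc (inverse (fact p)) (E + sc (of_nat j) X) + sc (inverse (fact p)) X"
        using IH(3) by (simp add: V.scale_scale fact_aux del: of_nat_Suc fact_Suc)
      also have "\<dots> = sc (inverse (fact p)) (E + sc (of_nat (Suc j)) X)"
        by (simp add: V.scale_right_distrib V.scale_left_distrib algebra_simps)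
      finally show ?thesis .
    qed
    show ?case using a b c pq q_eq unfolding m_def p_def by simp
  qed
  have part1: "\<forall>m. 1 \<le> m \<and> m \<le> n \<longrightarrow>
            cong_mod_t (n - m + 1) (lie_iter sc br B m)
              (\<lambda>k. lie_iter sc br A m k
                   + (if k = n - m then sc (inverse (fact (n - m))) \<Delta> else 0))"
  proof (intro allI impI)
    fix m assume m: "1 \<le> m \<and> m \<le> n"
    then obtain j where j: "m = Suc j" "j < n" by (cases m) auto
    have eq: "lie_iter sc br B m k = lie_iter sc br A m k + D m k" for k
      unfolding D_def by simp
    show "cong_mod_t (n - m + 1) (lie_iter sc br B m)
              (\<lambda>k. lie_iter sc br A m k
                   + (if k = n - m then sc (inverse (fact (n - m))) \<Delta> else 0))"
      unfolding cong_mod_t_def eq using claim[OF j(2)] j(1)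
      by (auto simp: less_Suc_eq)
  qed
  have part2: "cong_mod_t 1 (lie_iter sc br B (Suc n))
              (\<lambda>k. lie_iter sc br A (Suc n) k + const_td E k
                   + sc (of_nat n) (td_bracket br A (const_td \<Delta>) k))"
  proof -
    obtain j where j: "n = Suc j" using n_pos by (cases n) auto
    have cl: "D n 0 = \<Delta>" "D n (Suc 0) = E + sc (of_nat j) X"
      using claim[of j] j by auto
    have "D (Suc n) 0 = D n (Suc 0) + br (A 0) (D n 0)"
      using step[of 0 n] j by simp
    also have "\<dots> = E + sc (of_nat n) X"
      using cl j by (simp add: X_def V.scale_left_distrib algebra_simps)
    finally have "D (Suc n) 0 = E + sc (of_nat n) X" .
    moreover have "td_bracket br A (const_td \<Delta>) 0 = X"
      by (simp add: td_bracket_def const_td_def X_def)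
    ultimately show ?thesis unfolding cong_mod_t_def D_def
      by (simp add: const_td_def algebra_simps)
  qed
  show ?thesis using part1 part2 by blast
qed

end
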